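(* Let $\theta_0>0$ and let $F_0$ be a probability distribution on $[0,\infty)$ such that for some $\gamma>0$, $\int (z^{\gamma}+z^{-\gamma})\,dF_0(z)<\infty$. Let $Z\sim F_0$. Then for every $0<\epsilon<\tfrac14$ there exists a probability distribution $F^*$ supported on \[ \left[\left(\frac{\epsilon}{\mathbb{E}[Z^{-\gamma}]}\right)^{1/\gamma},\ \left(\frac{\mathbb{E}[Z^{\gamma}]}{\epsilon}\right)^{1/\gamma}\right] \] such that $\|p_{\theta_0,F_0}-p_{\theta_0,F^*}\|_1<4\epsilon$.
   Context: For $\theta>0$ and a probability measure $F$ on $(0,\infty)$, $p_{\theta,F}(x,y)=\int z^2\theta e^{-z(x+\theta y)}\,dF(z)$ for $(x,y)\in(0,\infty)^2$ (exponential frailty model). $\|\cdot\|_1$ is the $L^1$ norm with respect to Lebesgue measure on $(0,\infty)^2$. *)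

theory Defs
  imports "HOL-Analysis.Analysis" "HOL-Probability.Probability"
begin

definition frailty_density :: "real \<Rightarrow> real measure \<Rightarrow> real \<Rightarrow> real \<Rightarrow> real" where
  "frailty_density \<theta> F x y = (\<integral>z. z^2 * \<theta> * exp (- z * (x + \<theta> * y)) \<partial>F)"

definition L1_dist_quadrant :: "(real \<Rightarrow> real \<Rightarrow> real) \<Rightarrow> (real \<Rightarrow> real \<Rightarrow> real) \<Rightarrow> ennreal" where
  "L1_dist_quadrant p q =
     (\<integral>\<^sup>+ w \<in> {0<..} \<times> {0<..}. ennreal \<bar>p (fst w) (snd w) - q (fst w) (snd w)\<bar> \<partial>(lborel :: (real \<times> real) measure))"

definition prob_dist_pos :: "real measure \<Rightarrow> bool" where
  "prob_dist_pos F \<longleftrightarrow> prob_space F \<and> sets F = sets borel \<and> measure F {0<..} = 1"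

end

theory Submission
  imports Defs
begin


lemma exp_int1:
  fixes l :: real assumes l: "0 < l"
  shows "(\<integral>\<^sup>+x. ennreal (l * exp (- x * l)) * indicator {0<..} x \<partial>lborel) = 1"
proof -
  have "(\<integral>\<^sup>+x. ennreal (l * exp (- x * l)) * indicator {0<..} x \<partial>lborel)
      = (\<integral>\<^sup>+x. ennreal (exponential_density l x) \<partial>lborel)"
    by (intro nn_integral_cong_AE, use AE_lborel_singleton[of 0] in eventually_elim)
       (auto simp: exponential_density_def indicator_def)
  also have "\<dots> = emeasure (density lborel (exponential_density l)) UNIV"
    by (subst emeasure_density) auto
  also have "\<dots> = 1"
    using prob_space.emeasure_space_1[OF prob_space_exponential_density[OF l]] by simp
  finally show ?thesis .
qed

lemma kernel_int:
  fixes z \<theta> :: real assumes z: "0 < z" and t: "0 < \<theta>"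
  shows "(\<integral>\<^sup>+w. ennreal (z^2 * \<theta> * exp (- z * (fst w + \<theta> * snd w))) * indicator ({0<..} \<times> {0<..}) w \<partial>(lborel::(real\<times>real) measure)) = 1"
proof -
  have eq: "ennreal (z^2 * \<theta> * exp (- z * (fst w + \<theta> * snd w))) * indicator ({0<..} \<times> {0<..}) w
     = (ennreal (z * exp (- fst w * z)) * indicator {0<..} (fst w)) *
       (ennreal ((z*\<theta>) * exp (- snd w * (z*\<theta>))) * indicator {0<..} (snd w))" for w :: "real \<times> real"
  proof -
    have "z^2 * \<theta> * exp (- z * (fst w + \<theta> * snd w)) = (z * exp (- fst w * z)) * ((z*\<theta>) * exp (- snd w * (z*\<theta>)))"
      by (simp add: power2_eq_square algebra_simps flip: exp_add)
    then show ?thesis using z t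
      by (cases w) (auto simp: indicator_def ennreal_mult[symmetric] mult_ac)
  qed
  have "(\<integral>\<^sup>+w. ennreal (z^2 * \<theta> * exp (- z * (fst w + \<theta> * snd w))) * indicator ({0<..} \<times> {0<..}) w \<partial>(lborel::(real\<times>real) measure))
     = (\<integral>\<^sup>+w. (ennreal (z * exp (- fst w * z)) * indicator {0<..} (fst w)) *
       (ennreal ((z*\<theta>) * exp (- snd w * (z*\<theta>))) * indicator {0<..} (snd w)) \<partial>(lborel \<Otimes>\<^sub>M lborel))"
    by (simp only: eq lborel_prod)
  also have "\<dots> = (\<integral>\<^sup>+x. \<integral>\<^sup>+y. (ennreal (z * exp (- x * z)) * indicator {0<..} x) *
       (ennreal ((z*\<theta>) * exp (- y * (z*\<theta>))) * indicator {0<..} y) \<partial>lborel \<partial>lborel)"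
    by (subst lborel.nn_integral_fst[symmetric]) auto
  also have "\<dots> = (\<integral>\<^sup>+x. (ennreal (z * exp (- x * z)) * indicator {0<..} x) *
       (\<integral>\<^sup>+y. ennreal ((z*\<theta>) * exp (- y * (z*\<theta>))) * indicator {0<..} y \<partial>lborel) \<partial>lborel)"
    by (subst nn_integral_cmult) auto
  also have "\<dots> = 1"
    using exp_int1[of "z*\<theta>"] exp_int1[of z] z t by simp
  finally show ?thesis .
qed

lemma markov_strict:
  fixes X :: "'a \<Rightarrow> real"
  assumes M: "prob_space M" and int: "integrable M X" and nn: "AE x in M. 0 \<le> X x" and e: "0 < \<epsilon>"
  shows "measure M {x\<in>space M. X x > (\<integral>x. X x \<partial>M) / \<epsilon>} < \<epsilon>"
proof (rule ccontr)
  interpret prob_space M by (rule M)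
  have Xm[measurable]: "X \<in> borel_measurable M" using int by auto
  define t where "t = (\<integral>x. X x \<partial>M) / \<epsilon>"
  define A where "A = {x\<in>space M. X x > t}"
  have Am[measurable]: "A \<in> sets M" unfolding A_def by measurable
  assume "\<not> measure M {x\<in>space M. X x > (\<integral>x. X x \<partial>M) / \<epsilon>} < \<epsilon>"
  then have P: "\<epsilon> \<le> measure M A" unfolding A_def t_def by simp
  have E0: "0 \<le> (\<integral>x. X x \<partial>M)" using nn by (rule integral_nonneg_AE)
  then have t0: "0 \<le> t" using e by (simp add: t_def)
  have intI: "integrable M (\<lambda>x. X x * indicator A x)"
    by (rule integrable_real_mult_indicator[OF Am int])
  have intT: "integrable M (\<lambda>x. t * indicator A x)"
    using Am by (intro integrable_mult_right integrable_real_indicator) (auto simp: emeasure_eq_measure)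
  have "(\<integral>x. X x * indicator A x \<partial>M) \<le> (\<integral>x. X x \<partial>M)"
    by (rule integral_mono_AE[OF intI int]) (use nn in \<open>eventually_elim, auto simp: indicator_def\<close>)
  also have "\<dots> = t * \<epsilon>" using e by (simp add: t_def)
  also have "\<dots> \<le> t * measure M A" using P t0 by (simp add: mult_left_mono)
  also have "\<dots> = (\<integral>x. t * indicator A x \<partial>M)" using Am by simp
  finally have le: "(\<integral>x. X x * indicator A x - t * indicator A x \<partial>M) \<le> 0"
    using intI intT by simp
  have nn2: "AE x in M. 0 \<le> X x * indicator A x - t * indicator A x"
    by (auto simp: A_def indicator_def)
  have int2: "integrable M (\<lambda>x. X x * indicator A x - t * indicator A x)"
    using intI intT by simp
  have "(\<integral>x. X x * indicator A x - t * indicator A x \<partial>M) = 0"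
    using le integral_nonneg_AE[OF nn2] by linarith
  then have "AE x in M. X x * indicator A x - t * indicator A x = 0"
    using integral_nonneg_eq_0_iff_AE[OF int2 nn2] by simp
  then have "AE x in M. x \<notin> A"
    by eventually_elim (auto simp: A_def indicator_def)
  then have "emeasure M A = 0"
    using AE_iff_measurable[of A M "\<lambda>x. x \<notin> A"] Am sets.sets_into_space[OF Am] by auto
  then have "measure M A = 0" by (simp add: measure_def)
  then show False using P e by simp
qed

lemma kernel_bound:
  fixes z s :: real assumes "0 \<le> z" "0 < s"
  shows "z^2 * exp (- z * s) \<le> 4 / s^2"
proof -
  have "z * s / 2 \<le> exp (z * s / 2)"
    using exp_ge_add_one_self[of "z * s / 2"] by linarith
  then have "(z * s / 2)^2 \<le> (exp (z * s / 2))^2"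
    using assms by (intro power_mono) auto
  also have "\<dots> = exp (z * s)" by (simp add: power2_eq_square flip: exp_add)
  finally have "z^2 * s^2 \<le> 4 * exp (z * s)" by (simp add: power_mult_distrib power_divide)
  then have "z^2 * s^2 * exp (- z * s) \<le> 4 * exp (z * s) * exp (- z * s)"
    by (intro mult_right_mono) auto
  also have "\<dots> = 4" by (simp flip: exp_add)
  finally show ?thesis using assms by (simp add: field_simps)
qed

theorem mainTheorem3:
  fixes \<theta>0 \<gamma> \<epsilon> :: real and F0 :: "real measure"
  assumes "\<theta>0 > 0"
    and "prob_dist_pos F0"
    and "\<gamma> > 0"
    and "integrable F0 (\<lambda>z. z powr \<gamma> + z powr (- \<gamma>))"
    and "0 < \<epsilon>" and "\<epsilon> < 1/4"
  shows "\<exists>Fs. prob_dist_pos Fs \<and>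
           measure Fs {(\<epsilon> / (\<integral>z. z powr (- \<gamma>) \<partial>F0)) powr (1/\<gamma>) ..
                       ((\<integral>z. z powr \<gamma> \<partial>F0) / \<epsilon>) powr (1/\<gamma>)} = 1 \<and>
           L1_dist_quadrant (frailty_density \<theta>0 F0) (frailty_density \<theta>0 Fs) < ennreal (4 * \<epsilon>)"
proof -
  note th = assms(1) and ga = assms(3) and e = assms(5,6)
  interpret F0: prob_space F0 using assms(2) unfolding prob_dist_pos_def by auto
  have setsF0[measurable_cong]: "sets F0 = sets borel" using assms(2) unfolding prob_dist_pos_def by auto
  have spF0[simp]: "space F0 = UNIV" using sets_eq_imp_space_eq[OF setsF0] by simp
  have pos1: "measure F0 {0<..} = 1" using assms(2) unfolding prob_dist_pos_def by auto
  have AEpos: "AE z in F0. 0 < z" using F0.AE_prob_1[OF pos1] by simp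
  have nonpos0: "measure F0 {..0} = 0"
  proof -
    have "measure F0 (space F0 - {0<..}) = 1 - measure F0 {0<..}"
      by (rule F0.prob_compl) simp
    moreover have "space F0 - {0<..} = {..0::real}" by auto
    ultimately show ?thesis using pos1 by simp
  qed
  define E1 where "E1 = (\<integral>z. z powr \<gamma> \<partial>F0)"
  define E2 where "E2 = (\<integral>z. z powr (- \<gamma>) \<partial>F0)"
  have int1: "integrable F0 (\<lambda>z. z powr \<gamma>)"
    by (rule Bochner_Integration.integrable_bound[OF assms(4)]) auto
  have int2: "integrable F0 (\<lambda>z. z powr (- \<gamma>))"
    by (rule Bochner_Integration.integrable_bound[OF assms(4)]) auto
  have E1pos: "0 < E1"
  proof -
    have "E1 \<noteq> 0"
    proof
      assume "E1 = 0"
      then have "AE z in F0. z powr \<gamma> = 0"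
        using integral_nonneg_eq_0_iff_AE[OF int1] unfolding E1_def by auto
      with AEpos have "AE z in F0. False" by eventually_elim auto
      then show False by simp
    qed
    moreover have "0 \<le> E1" unfolding E1_def by (rule integral_nonneg_AE) auto
    ultimately show ?thesis by simp
  qed
  have E2pos: "0 < E2"
  proof -
    have "E2 \<noteq> 0"
    proof
      assume "E2 = 0"
      then have "AE z in F0. z powr (- \<gamma>) = 0"
        using integral_nonneg_eq_0_iff_AE[OF int2] unfolding E2_def by auto
      with AEpos have "AE z in F0. False" by eventually_elim auto
      then show False by simp
    qed
    moreover have "0 \<le> E2" unfolding E2_def by (rule integral_nonneg_AE) auto
    ultimately show ?thesis by simp
  qed
  define a where "a = (\<epsilon> / E2) powr (1/\<gamma>)"
  define b where "b = (E1 / \<epsilon>) powr (1/\<gamma>)"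
  have apos: "0 < a" unfolding a_def using E2pos e by simp
  have bpos: "0 < b" unfolding b_def using E1pos e by simp
  have bpow: "b powr \<gamma> = E1 / \<epsilon>"
    unfolding b_def powr_powr using ga E1pos e by simp
  have apow: "a powr (- \<gamma>) = E2 / \<epsilon>"
    unfolding a_def powr_powr using ga E2pos e by (simp add: powr_minus_divide)
  have Pb: "measure F0 {z. b < z} < \<epsilon>"
  proof -
    have "measure F0 {z. b < z} \<le> measure F0 {z\<in>space F0. z powr \<gamma> > E1 / \<epsilon>}"
    proof (rule F0.finite_measure_mono)
      show "{z. b < z} \<subseteq> {z \<in> space F0. E1 / \<epsilon> < z powr \<gamma>}"
        using bpos ga powr_less_mono2[of \<gamma> b] by (auto simp flip: bpow)
    qed measurable
    also have "\<dots> < \<epsilon>"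
      using markov_strict[OF F0.prob_space_axioms int1 _ e(1)] unfolding E1_def by simp
    finally show ?thesis .
  qed
  have Pa: "measure F0 {z. z < a} < \<epsilon>"
  proof -
    have "measure F0 {z. z < a} \<le> measure F0 ({z\<in>space F0. z powr (-\<gamma>) > E2 / \<epsilon>} \<union> {..0})"
    proof (rule F0.finite_measure_mono)
      show "{z. z < a} \<subseteq> {z\<in>space F0. z powr (-\<gamma>) > E2 / \<epsilon>} \<union> {..0}"
        using apos ga powr_less_mono2_neg[of "-\<gamma>" _ a] by (auto simp flip: apow)
    qed measurable
    also have "\<dots> \<le> measure F0 {z\<in>space F0. z powr (-\<gamma>) > E2 / \<epsilon>} + measure F0 {..0}"
      by (rule measure_subadditive) (auto simp: F0.emeasure_eq_measure)
    also have "\<dots> < \<epsilon>"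
      using markov_strict[OF F0.prob_space_axioms int2 _ e(1)] nonpos0 unfolding E2_def by simp
    finally show ?thesis .
  qed
  define S where "S = {a..b}"
  define p where "p = measure F0 S"
  have Sm[measurable]: "S \<in> sets borel" unfolding S_def by simp
  have p_gt: "1 - p < 2 * \<epsilon>"
  proof -
    have "1 - p = measure F0 (space F0 - S)"
      unfolding p_def by (rule F0.prob_compl[symmetric]) simp
    also have "\<dots> \<le> measure F0 ({z. z < a} \<union> {z. b < z})"
      by (rule F0.finite_measure_mono) (auto simp: S_def)
    also have "\<dots> \<le> measure F0 {z. z < a} + measure F0 {z. b < z}"
      by (rule measure_subadditive) (auto simp: F0.emeasure_eq_measure)
    finally show ?thesis using Pa Pb by simp
  qed
  have ppos: "0 < p" using p_gt e by simp
  have ple1: "p \<le> 1" unfolding p_def by simp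
  define g where "g z = indicator S z / p" for z :: real
  have gm[measurable]: "g \<in> borel_measurable borel" unfolding g_def by measurable
  have g_nn: "0 \<le> g z" for z unfolding g_def using ppos by simp
  have intg: "integrable F0 g" unfolding g_def
    by (intro integrable_divide integrable_real_indicator) (auto simp: F0.emeasure_eq_measure)
  define Fs where "Fs = density F0 (\<lambda>z. ennreal (g z))"
  have setsFs: "sets Fs = sets borel" unfolding Fs_def by (simp add: setsF0)
  have emFs: "emeasure Fs A = (\<integral>\<^sup>+z. ennreal (g z) * indicator A z \<partial>F0)" if "A \<in> sets borel" for A
    unfolding Fs_def using that by (subst emeasure_density) auto
  have gS: "ennreal (g z) * indicator S z = ennreal (g z)" for z
    by (auto simp: g_def indicator_def)
  have intg1: "(\<integral>z. g z \<partial>F0) = 1"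
    unfolding g_def using ppos by (simp add: p_def)
  have emS: "emeasure Fs S = 1"
    using emFs[OF Sm] gS nn_integral_eq_integral[OF intg] intg1 g_nn by simp
  have emU: "emeasure Fs (space Fs) = 1"
  proof -
    have "space Fs = UNIV" using sets_eq_imp_space_eq[OF setsFs] by simp
    then show ?thesis using emFs[of UNIV] nn_integral_eq_integral[OF intg] intg1 g_nn by simp
  qed
  interpret Fs: prob_space Fs by (rule prob_spaceI[OF emU])
  have mS: "measure Fs S = 1" using emS by (simp add: measure_def)
  have mpos: "measure Fs {0<..} = 1"
  proof -
    have "measure Fs S \<le> measure Fs {0<..}"
      by (rule Fs.finite_measure_mono) (use apos in \<open>auto simp: S_def setsFs\<close>)
    then show ?thesis using mS Fs.prob_le_1[of "{0<..}"] by simp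
  qed
  have pdp: "prob_dist_pos Fs" unfolding prob_dist_pos_def using Fs.prob_space_axioms setsFs mpos by simp
  define k where "k z x y = z^2 * \<theta>0 * exp (- z * (x + \<theta>0 * y))" for z x y :: real
  have k_nn: "0 \<le> k z x y" for z x y unfolding k_def using th by simp
  have intk: "integrable F0 (\<lambda>z. k z x y)" if "0 < x" "0 < y" for x y
  proof (rule F0.integrable_const_bound[where B="\<theta>0 * (4 / (x + \<theta>0 * y)^2)"])
    show "AE z in F0. norm (k z x y) \<le> \<theta>0 * (4 / (x + \<theta>0 * y)^2)"
      using AEpos
    proof eventually_elim
      case (elim z)
      have s: "0 < x + \<theta>0 * y" using that th by (simp add: add_pos_pos)
      have "norm (k z x y) = \<theta>0 * (z^2 * exp (- z * (x + \<theta>0 * y)))"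
        using k_nn[of z x y] by (simp add: k_def mult_ac)
      also have "\<dots> \<le> \<theta>0 * (4 / (x + \<theta>0 * y)^2)"
        using kernel_bound[of z "x + \<theta>0 * y"] elim s th by (intro mult_left_mono) auto
      finally show ?case .
    qed
  qed (simp add: k_def)
  have fd0: "frailty_density \<theta>0 F0 x y = (\<integral>z. k z x y \<partial>F0)" for x y
    unfolding frailty_density_def k_def ..
  have fds: "frailty_density \<theta>0 Fs x y = (\<integral>z. g z * k z x y \<partial>F0)" for x y
    unfolding frailty_density_def k_def Fs_def
    by (subst integral_density) (auto simp: g_nn)
  have ptwise: "ennreal \<bar>frailty_density \<theta>0 F0 x y - frailty_density \<theta>0 Fs x y\<bar>
      \<le> (\<integral>\<^sup>+z. ennreal (k z x y) * ennreal \<bar>1 - g z\<bar> \<partial>F0)" if "0 < x" "0 < y" for x y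
  proof -
    have ik: "integrable F0 (\<lambda>z. k z x y)" using intk[OF that] .
    have igk: "integrable F0 (\<lambda>z. g z * k z x y)"
    proof -
      have "integrable F0 (\<lambda>z. k z x y * indicator S z / p)"
        by (intro integrable_divide integrable_real_mult_indicator ik) simp
      moreover have "(\<lambda>z. g z * k z x y) = (\<lambda>z. k z x y * indicator S z / p)"
        by (simp add: g_def fun_eq_iff)
      ultimately show ?thesis by simp
    qed
    have "frailty_density \<theta>0 F0 x y - frailty_density \<theta>0 Fs x y = (\<integral>z. k z x y - g z * k z x y \<partial>F0)"
      unfolding fd0 fds using ik igk by simp
    then have "ennreal \<bar>frailty_density \<theta>0 F0 x y - frailty_density \<theta>0 Fs x y\<bar>
       \<le> (\<integral>\<^sup>+z. norm (k z x y - g z * k z x y) \<partial>F0)"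
      using integral_norm_bound_ennreal[of F0 "\<lambda>z. k z x y - g z * k z x y"] ik igk by simp
    also have "\<dots> = (\<integral>\<^sup>+z. ennreal (k z x y) * ennreal \<bar>1 - g z\<bar> \<partial>F0)"
    proof (rule nn_integral_cong)
      fix z
      have "norm (k z x y - g z * k z x y) = k z x y * \<bar>1 - g z\<bar>"
      proof -
        have "k z x y - g z * k z x y = k z x y * (1 - g z)" by (simp add: algebra_simps)
        then show ?thesis using k_nn[of z x y] by (simp add: abs_mult)
      qed
      then show "ennreal (norm (k z x y - g z * k z x y)) = ennreal (k z x y) * ennreal \<bar>1 - g z\<bar>"
        using k_nn[of z x y] by (simp add: ennreal_mult)
    qed
    finally show ?thesis .
  qed
  define Q where "Q = ({0<..} \<times> {0<..} :: (real \<times> real) set)"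
  have Qm[measurable]: "Q \<in> sets borel" unfolding Q_def by (intro borel_open open_Times) auto
  have Qm2[measurable]: "Q \<in> sets ((borel::real measure) \<Otimes>\<^sub>M (borel::real measure))"
    unfolding Q_def by (intro pair_measureI) auto
  have "L1_dist_quadrant (frailty_density \<theta>0 F0) (frailty_density \<theta>0 Fs)
     \<le> (\<integral>\<^sup>+w. (\<integral>\<^sup>+z. ennreal (k z (fst w) (snd w)) * ennreal \<bar>1 - g z\<bar> \<partial>F0) * indicator Q w \<partial>lborel)"
    unfolding L1_dist_quadrant_def Q_def[symmetric]
    by (intro nn_integral_mono) (auto simp: Q_def indicator_def intro!: ptwise)
  also have "\<dots> = (\<integral>\<^sup>+w. (\<integral>\<^sup>+z. ennreal (k z (fst w) (snd w)) * indicator Q w * ennreal \<bar>1 - g z\<bar> \<partial>F0) \<partial>lborel)"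
    by (subst nn_integral_multc[symmetric]) (auto simp: mult_ac k_def g_def)
  also have "\<dots> = (\<integral>\<^sup>+z. (\<integral>\<^sup>+w. ennreal (k z (fst w) (snd w)) * indicator Q w * ennreal \<bar>1 - g z\<bar> \<partial>lborel) \<partial>F0)"
  proof -
    interpret pf: pair_sigma_finite F0 "lborel :: (real \<times> real) measure"
      by (intro pair_sigma_finite.intro F0.sigma_finite_measure_axioms lborel.sigma_finite_measure_axioms)
    show ?thesis
    proof (rule pf.Fubini')
      have sl: "sets (lborel::(real\<times>real) measure) = sets ((borel::real measure) \<Otimes>\<^sub>M (borel::real measure))"
        by (subst lborel_prod[symmetric]) (intro sets_pair_measure_cong sets_lborel)
      have sp[measurable_cong]: "sets (F0 \<Otimes>\<^sub>M (lborel::(real\<times>real) measure))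
          = sets ((borel::real measure) \<Otimes>\<^sub>M ((borel::real measure) \<Otimes>\<^sub>M (borel::real measure)))"
        by (intro sets_pair_measure_cong setsF0 sl)
      show "(\<lambda>(z, w). ennreal (k z (fst w) (snd w)) * indicator Q w * ennreal \<bar>1 - g z\<bar>)
          \<in> borel_measurable (F0 \<Otimes>\<^sub>M lborel)"
        unfolding k_def g_def split_beta' by measurable
    qed
  qed
  also have "\<dots> = (\<integral>\<^sup>+z. ennreal \<bar>1 - g z\<bar> \<partial>F0)"
  proof (rule nn_integral_cong_AE)
    show "AE z in F0. (\<integral>\<^sup>+w. ennreal (k z (fst w) (snd w)) * indicator Q w * ennreal \<bar>1 - g z\<bar> \<partial>lborel) = ennreal \<bar>1 - g z\<bar>"
      using AEpos
    proof eventually_elim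
      case (elim z)
      have "(\<integral>\<^sup>+w. ennreal (k z (fst w) (snd w)) * indicator Q w * ennreal \<bar>1 - g z\<bar> \<partial>lborel)
          = (\<integral>\<^sup>+w. ennreal (k z (fst w) (snd w)) * indicator Q w \<partial>lborel) * ennreal \<bar>1 - g z\<bar>"
      proof -
        have m: "(\<lambda>w. ennreal (k z (fst w) (snd w)) * indicator Q w) \<in> borel_measurable (borel::(real\<times>real) measure)"
          by (subst borel_prod[symmetric]) (unfold k_def, measurable)
        then have m': "(\<lambda>w. ennreal (k z (fst w) (snd w)) * indicator Q w) \<in> borel_measurable (lborel::(real\<times>real) measure)"
          by simp
        show ?thesis using nn_integral_multc[OF m', of "ennreal \<bar>1 - g z\<bar>"] by simp
      qed
      also have "(\<integral>\<^sup>+w. ennreal (k z (fst w) (snd w)) * indicator Q w \<partial>lborel) = 1"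
        unfolding k_def Q_def by (rule kernel_int[OF elim th])
      finally show ?case by simp
    qed
  qed
  also have "\<dots> = ennreal (2 - 2 * p)"
  proof -
    have eq: "\<bar>1 - g z\<bar> = 1 - indicator S z + (1/p - 1) * indicator S z" for z
      using ppos ple1 by (auto simp: g_def indicator_def field_simps)
    have int3: "integrable F0 (\<lambda>z. \<bar>1 - g z\<bar>)"
      using intg by auto
    have "(\<integral>z. \<bar>1 - g z\<bar> \<partial>F0) = 2 - 2 * p"
    proof -
      have intS: "integrable F0 (indicator S :: real \<Rightarrow> real)"
        by (intro integrable_real_indicator) (auto simp: F0.emeasure_eq_measure)
      have "(\<integral>z. \<bar>1 - g z\<bar> \<partial>F0) = (\<integral>z. 1 - indicator S z + (1/p - 1) * indicator S z \<partial>F0)"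
        by (simp only: eq)
      also have "\<dots> = 1 - p + (1/p - 1) * p"
        using intS F0.prob_space spF0 by (simp add: p_def)
      also have "\<dots> = 2 - 2 * p" using ppos by (simp add: field_simps)
      finally show ?thesis .
    qed
    then show ?thesis
      using nn_integral_eq_integral[OF int3] by simp
  qed
  also have "\<dots> < ennreal (4 * \<epsilon>)"
    using p_gt ple1 by (subst ennreal_less_iff) auto
  finally have L1: "L1_dist_quadrant (frailty_density \<theta>0 F0) (frailty_density \<theta>0 Fs) < ennreal (4 * \<epsilon>)" .
  show ?thesis
    using pdp mS L1 unfolding S_def a_def b_def E1_def E2_def by blast
qed

end
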